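(* Let $\Gamma\subseteq\mathbb{Z}^d$ be a finite set. For every $n\ge2$ and $x\in\bar\Gamma$, $$\rho_n(\Phi_\Gamma(x))=\mathbb{E}^x\Big[\sum_{j=0}^{\tau-1}g_n(S_j)\Big],\qquad g_n(y)=\sum_{e\in\mathbb{Z}^d,|e|=1}\frac1{2d}\sum_{i=1}^n\frac{e^{\otimes i}}{i!}\otimes\rho_{n-i}(\Phi_\Gamma(y+e)),$$ and $\rho_0(\Phi_\Gamma(x))=1$, $\rho_1(\Phi_\Gamma(x))=0$ for every $x\in\bar\Gamma$.
   Context: Let $(S_k)_{k\ge0}$ be the simple random walk on $\mathbb{Z}^d$ started at $S_0=x$ (under $\mathbb{E}^x$), with i.i.d. increments uniformly distributed on the $2d$ unit vectors of $\mathbb{Z}^d$. $\partial\Gamma=\{y\in\mathbb{Z}^d\setminus\Gamma: |y-w|=1\text{ for some }w\in\Gamma\}$, $\bar\Gamma=\Gamma\cup\partial\Gamma$, $\tau=\min\{k\ge0:S_k\notin\Gamma\}$. $T((\mathbb{R}^d))$ is the algebra of formal tensor series $\mathbf a=(a_0,a_1,\dots)$, $a_n\in(\mathbb{R}^d)^{\otimes n}$, with $(\mathbf a\otimes\mathbf b)_n=\sum_{k=0}^na_k\otimes b_{n-k}$ and $\rho_n(\mathbf a)=a_n$; $\exp(v)=\sum_{i\ge0}v^{\otimes i}/i!$ for $v\in\mathbb{R}^d$. $\Phi_\Gamma(x)=\mathbb{E}^x[\exp(S_1-S_0)\otimes\cdots\otimes\exp(S_\tau-S_{\tau-1})]$ (coordinatewise;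 equal to $(1,0,0,\dots)$ if $\tau=0$), the expected signature of the piecewise linear random walk path stopped at $\tau$. *)

theory Defs
  imports "HOL-Probability.Probability"
begin

text \<open>Points of Z^d are integer vectors indexed by a finite type 'd (d = CARD('d)).\<close>

definition unit_vecs :: "(int ^ 'd) set" where
  "unit_vecs = {e. (\<Sum>i\<in>UNIV. (e $ i)^2) = 1}"

definition bdry :: "(int ^ 'd) set \<Rightarrow> (int ^ 'd) set" where
  "bdry G = {y. y \<notin> G \<and> (\<exists>w\<in>G. y - w \<in> unit_vecs)}"

definition clos :: "(int ^ 'd) set \<Rightarrow> (int ^ 'd) set" where
  "clos G = G \<union> bdry G"

definition walk_measure :: "(int ^ 'd) stream measure" where
  "walk_measure = stream_space (measure_pmf (pmf_of_set unit_vecs))"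

definition walkpos :: "int ^ 'd \<Rightarrow> (int ^ 'd) stream \<Rightarrow> nat \<Rightarrow> int ^ 'd" where
  "walkpos x \<omega> k = x + sum_list (stake k \<omega>)"

text \<open>Exit time tau = min{k >= 0. S_k not in G}; None if the walk never exits (a null event for finite G).\<close>
definition exit_time :: "(int ^ 'd) set \<Rightarrow> int ^ 'd \<Rightarrow> (int ^ 'd) stream \<Rightarrow> nat option" where
  "exit_time G x \<omega> = (if \<exists>k. walkpos x \<omega> k \<notin> G
      then Some (LEAST k. walkpos x \<omega> k \<notin> G) else None)"

text \<open>An element of (R^d)^{\<otimes>n} is represented by its coordinates, a function on index
  words of length n (values on words of other lengths are irrelevant).  A formal tensor
  series a = (a_0, a_1, ...) is a map from the level n to the level-n tensor, so that
  rho_n(a) = a n.\<close>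

type_synonym 'd tensor = "'d list \<Rightarrow> real"
type_synonym 'd tseries = "nat \<Rightarrow> 'd tensor"

definition tunit :: "'d tseries" where
  "tunit n ws = (if n = 0 then 1 else 0)"

definition tmult :: "'d tseries \<Rightarrow> 'd tseries \<Rightarrow> 'd tseries" where
  "tmult a b n ws = (\<Sum>k\<le>n. a k (take k ws) * b (n - k) (drop k ws))"

definition texp :: "real ^ 'd \<Rightarrow> 'd tseries" where
  "texp v i ws = (\<Prod>w\<leftarrow>ws. v $ w) / fact i"

definition ivec :: "int ^ 'd \<Rightarrow> real ^ 'd" where
  "ivec v = (\<chi> i. real_of_int (v $ i))"

text \<open>Signature of the piecewise linear path with the given list of increments:
  exp(v_1) \<otimes> ... \<otimes> exp(v_k) (the unit for the empty list).\<close>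
definition sig :: "(int ^ 'd) list \<Rightarrow> 'd tseries" where
  "sig vs = foldr (\<lambda>v acc. tmult (texp (ivec v)) acc) vs tunit"

definition Phi :: "(int ^ 'd) set \<Rightarrow> int ^ 'd \<Rightarrow> 'd tseries" where
  "Phi G x n ws = (\<integral>\<omega>. (case exit_time G x \<omega> of
        Some t \<Rightarrow> sig (stake t \<omega>) n ws | None \<Rightarrow> 0) \<partial>walk_measure)"

definition gfun :: "(int ^ 'd) set \<Rightarrow> nat \<Rightarrow> int ^ 'd \<Rightarrow> 'd tensor" where
  "gfun G n y ws = (\<Sum>e\<in>unit_vecs. (1 / (2 * real CARD('d))) *
      (\<Sum>i=1..n. ((\<Prod>w\<leftarrow>take i ws. real_of_int (e $ w)) / fact i)
                  * Phi G (y + e) (n - i) (drop i ws)))"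

end

theory Submission
  imports Defs
begin


definition uv :: "'d \<Rightarrow> int \<Rightarrow> int ^ 'd" where
  "uv i s = (\<chi> j. if j = i then s else 0)"

lemma unit_vecs_char: "unit_vecs = (\<lambda>(i,s). uv i s) ` (UNIV \<times> {-1,1})"
proof (rule set_eqI, rule iffI)
  fix e :: "int ^ 'd" assume "e \<in> unit_vecs"
  hence S: "(\<Sum>i\<in>UNIV. (e $ i)^2) = 1" by (simp add: unit_vecs_def)
  have "\<exists>i. e $ i \<noteq> 0"
  proof (rule ccontr)
    assume "\<not> ?thesis" then have "(\<Sum>i\<in>UNIV. (e $ i)^2) = 0" by simp
    with S show False by simp
  qed
  then obtain i where i: "e $ i \<noteq> 0" by blast
  have split: "(\<Sum>j\<in>UNIV. (e $ j)^2) = (e $ i)^2 + (\<Sum>j\<in>UNIV-{i}. (e $ j)^2)"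
    by (simp add: sum.remove)
  have nn: "(\<Sum>j\<in>UNIV-{i}. (e $ j)^2) \<ge> 0" by (intro sum_nonneg) auto
  have "(e $ i)^2 \<ge> 1" using i by (smt (verit) power2_less_eq_zero_iff zero_less_power2)
  hence sq: "(e $ i)^2 = 1" and rest: "(\<Sum>j\<in>UNIV-{i}. (e $ j)^2) = 0" using S split nn by linarith+
  have "\<forall>j\<in>UNIV-{i}. (e $ j)^2 = 0"
    using rest by (subst (asm) sum_nonneg_eq_0_iff) auto
  hence z: "\<And>j. j \<noteq> i \<Longrightarrow> e $ j = 0" by auto
  have "e $ i = 1 \<or> e $ i = -1" using sq by (simp add: power2_eq_1_iff)
  hence "e = uv i (e $ i)" by (auto simp: uv_def vec_eq_iff z)
  thus "e \<in> (\<lambda>(i,s). uv i s) ` (UNIV \<times> {-1,1})"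
    using \<open>e $ i = 1 \<or> e $ i = -1\<close> by force
next
  fix e :: "int ^ 'd" assume "e \<in> (\<lambda>(i,s). uv i s) ` (UNIV \<times> {-1,1})"
  then obtain i s where e: "e = uv i s" and s: "s = -1 \<or> s = 1" by auto
  have "(\<Sum>j\<in>UNIV. (e $ j)^2) = (\<Sum>j\<in>UNIV. if j = i then s^2 else 0)"
    by (intro sum.cong) (auto simp: e uv_def)
  also have "\<dots> = 1" using s by (auto simp: sum.delta)
  finally show "e \<in> unit_vecs" by (simp add: unit_vecs_def)
qed

lemma inj_uv: "inj_on (\<lambda>(i,s). uv i s) (UNIV \<times> {-1,1::int})"
proof (rule inj_onI, clarify)
  fix i s j t assume s: "s \<in> {-1,1::int}" and t: "t \<in> {-1,1::int}" and eq: "uv i s = uv j t"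
  have "uv i s $ i = uv j t $ i" using eq by simp
  hence "s = (if i = j then t else 0)" by (simp add: uv_def)
  thus "i = j \<and> s = t" using s t by (auto split: if_splits)
qed

lemma finite_unit_vecs: "finite (unit_vecs :: (int^'d) set)"
  by (simp add: unit_vecs_char)

lemma card_unit_vecs: "card (unit_vecs :: (int^'d) set) = 2 * CARD('d)"
  by (simp add: unit_vecs_char card_image[OF inj_uv] card_cartesian_product)

lemma unit_vecs_ne: "(unit_vecs :: (int^'d) set) \<noteq> {}"
  using card_unit_vecs[where 'd='d] by auto

lemma uv_in: "uv i 1 \<in> unit_vecs"
  by (force simp: unit_vecs_char)

lemma unit_vecs_coord: "e \<in> unit_vecs \<Longrightarrow> \<bar>e $ w\<bar> \<le> 1"
  by (auto simp: unit_vecs_char uv_def)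

lemma unit_vecs_neg: "e \<in> unit_vecs \<Longrightarrow> - e \<in> unit_vecs"
  by (simp add: unit_vecs_def)

lemma sum_unit_vecs_coord: fixes w :: "'d::finite" shows "(\<Sum>e\<in>unit_vecs. real_of_int (e $ w)) = 0"
proof -
  have "(\<Sum>e\<in>unit_vecs. real_of_int (e $ w)) = (\<Sum>e\<in>uminus ` unit_vecs. real_of_int (e $ w))"
  proof -
    have "uminus ` unit_vecs = (unit_vecs :: (int^'d) set)"
      using unit_vecs_neg by (force simp: image_iff intro: exI[of _ "- _"])
    thus ?thesis by (simp only:)
  qed
  also have "\<dots> = (\<Sum>e\<in>unit_vecs. - real_of_int (e $ w))"
    by (subst sum.reindex) (auto simp: inj_on_def)
  finally show ?thesis by (simp add: sum_negf)
qed



abbreviation "U \<equiv> (unit_vecs :: (int^'d) set)"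

lemma set_pmf_U: "set_pmf (pmf_of_set (unit_vecs :: (int^'d) set)) = unit_vecs"
  by (rule set_pmf_of_set[OF unit_vecs_ne finite_unit_vecs])

lemma sets_walk: "sets (walk_measure :: (int^'d) stream measure) = sets (stream_space (count_space UNIV))"
  unfolding walk_measure_def by (rule sets_stream_space_cong) simp

lemma space_walk: "space (walk_measure :: (int^'d) stream measure) = UNIV"
  by (simp add: walk_measure_def space_stream_space)

lemma prob_walk: "prob_space (walk_measure :: (int^'d) stream measure)"
  unfolding walk_measure_def by (rule prob_space.prob_space_stream_space[OF measure_pmf.prob_space_axioms])

lemma meas_stake:
  fixes h :: "(int^'d) list \<Rightarrow> 'b"
  assumes "h \<in> UNIV \<rightarrow> space N"
  shows "(\<lambda>\<omega>. h (stake k \<omega>)) \<in> measurable (walk_measure :: (int^'d) stream measure) N"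
proof -
  have "(\<lambda>\<omega>. h (stake k \<omega>)) \<in> measurable (stream_space (count_space UNIV)) N"
    by (rule measurable_compose[OF measurable_stake]) (use assms in simp)
  thus ?thesis by (subst measurable_cong_sets[OF sets_walk refl])
qed

lemma walkpos_stake: "j \<le> k \<Longrightarrow> walkpos x \<omega> j = x + sum_list (take j (stake k \<omega>))"
  by (simp add: walkpos_def take_stake min_def)

lemma exit_time_Some_iff:
  "exit_time G x \<omega> = Some k \<longleftrightarrow> walkpos x \<omega> k \<notin> G \<and> (\<forall>j<k. walkpos x \<omega> j \<in> G)"
proof
  assume h: "exit_time G x \<omega> = Some k"
  hence ex: "\<exists>k. walkpos x \<omega> k \<notin> G" by (auto simp: exit_time_def split: if_splits)
  hence k: "k = (LEAST k. walkpos x \<omega> k \<notin> G)" using h by (simp add: exit_time_def)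
  show "walkpos x \<omega> k \<notin> G \<and> (\<forall>j<k. walkpos x \<omega> j \<in> G)"
    using LeastI_ex[OF ex] not_less_Least k by blast
next
  assume h: "walkpos x \<omega> k \<notin> G \<and> (\<forall>j<k. walkpos x \<omega> j \<in> G)"
  hence "(LEAST k. walkpos x \<omega> k \<notin> G) = k"
    by (intro Least_equality) (auto simp: not_less[symmetric])
  thus "exit_time G x \<omega> = Some k" using h by (auto simp: exit_time_def)
qed

lemma exit_time_None_iff: "exit_time G x \<omega> = None \<longleftrightarrow> (\<forall>k. walkpos x \<omega> k \<in> G)"
  by (simp add: exit_time_def)

lemma meas_exit_time:
  "(\<lambda>\<omega>. exit_time G x \<omega>) \<in> measurable (walk_measure :: (int^'d) stream measure) (count_space UNIV)"
proof (subst measurable_count_space_eq2_countable, intro conjI ballI)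
  fix a :: "nat option"
  have Sk: "(\<lambda>\<omega>. exit_time G x \<omega>) -` {Some k} \<inter> space (walk_measure :: (int^'d) stream measure)
      \<in> sets walk_measure" for k
  proof -
    let ?h = "\<lambda>l. x + sum_list l \<notin> G \<and> (\<forall>j<k. x + sum_list (take j l) \<in> G)"
    have "Measurable.pred (walk_measure :: (int^'d) stream measure) (\<lambda>\<omega>. ?h (stake k \<omega>))"
      by (rule meas_stake) simp
    moreover have "?h (stake k \<omega>) = (exit_time G x \<omega> = Some k)" for \<omega>
      by (simp add: exit_time_Some_iff walkpos_stake[of _ k] take_stake min_def)
    ultimately have "Measurable.pred (walk_measure :: (int^'d) stream measure) (\<lambda>\<omega>. exit_time G x \<omega> = Some k)"
      by simp
    thus ?thesis by (simp add: pred_def vimage_def Int_def space_walk)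
  qed
  show "(\<lambda>\<omega>. exit_time G x \<omega>) -` {a} \<inter> space walk_measure \<in> sets (walk_measure :: (int^'d) stream measure)"
  proof (cases a)
    case (Some k) thus ?thesis using Sk by simp
  next
    case None
    have "(\<lambda>\<omega>. exit_time G x \<omega>) -` {None} \<inter> space (walk_measure :: (int^'d) stream measure)
        = space walk_measure - (\<Union>k. (\<lambda>\<omega>. exit_time G x \<omega>) -` {Some k} \<inter> space walk_measure)"
      by auto
    also have "\<dots> \<in> sets walk_measure" using Sk by (intro sets.Diff sets.countable_UN) auto
    finally show ?thesis using None by simp
  qed
qed simp

lemma meas_case_exit:
  fixes F :: "nat \<Rightarrow> (int^'d) stream \<Rightarrow> 'b"
  assumes "\<And>t. F t \<in> measurable walk_measure N" and "z \<in> space N"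
  shows "(\<lambda>\<omega>. case exit_time G x \<omega> of Some t \<Rightarrow> F t \<omega> | None \<Rightarrow> z) \<in> measurable walk_measure N"
proof (rule measurable_compose_countable[OF _ meas_exit_time])
  fix i :: "nat option"
  show "(\<lambda>\<omega>. case i of Some t \<Rightarrow> F t \<omega> | None \<Rightarrow> z) \<in> measurable walk_measure N"
    using assms by (cases i) auto
qed

lemma nn_step:
  assumes "f \<in> borel_measurable (walk_measure :: (int^'d) stream measure)"
  shows "(\<integral>\<^sup>+\<omega>. f \<omega> \<partial>walk_measure) = (\<Sum>e\<in>(unit_vecs :: (int^'d) set). \<integral>\<^sup>+\<omega>. f (e ## \<omega>) \<partial>walk_measure) / card (unit_vecs :: (int^'d) set)"
proof -
  have m: "f \<in> borel_measurable (stream_space (measure_pmf (pmf_of_set (unit_vecs :: (int^'d) set))))"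
    using assms by (simp add: walk_measure_def)
  show ?thesis
    unfolding walk_measure_def
    by (subst prob_space.nn_integral_stream_space[OF measure_pmf.prob_space_axioms m])
       (simp add: nn_integral_pmf_of_set[OF unit_vecs_ne finite_unit_vecs])
qed

lemma AE_units: "AE \<omega> in (walk_measure :: (int^'d) stream measure). \<forall>i. \<omega> !! i \<in> unit_vecs"
proof -
  have "AE \<omega> in stream_space (measure_pmf (pmf_of_set (unit_vecs :: (int^'d) set))). stream_all (\<lambda>e. e \<in> unit_vecs) \<omega>"
    by (rule prob_space.AE_stream_all[OF measure_pmf.prob_space_axioms]) (auto simp: AE_measure_pmf_iff set_pmf_U)
  thus ?thesis unfolding walk_measure_def stream_all_def .
qed



lemma enn_avg:
  fixes a :: "'a \<Rightarrow> ennreal"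
  assumes "finite A" "card A > 0" "\<And>e. e \<in> A \<Longrightarrow> a e < \<infinity>"
  shows "enn2real ((\<Sum>e\<in>A. a e) / of_nat (card A)) = (\<Sum>e\<in>A. enn2real (a e)) / card A"
proof -
  have "(\<Sum>e\<in>A. a e) = (\<Sum>e\<in>A. ennreal (enn2real (a e)))"
    using assms(3) by (intro sum.cong) (auto simp: less_top ennreal_enn2real)
  also have "\<dots> = ennreal (\<Sum>e\<in>A. enn2real (a e))" by (simp add: sum_nonneg)
  finally have 1: "(\<Sum>e\<in>A. a e) = ennreal (\<Sum>e\<in>A. enn2real (a e))" .
  have "(\<Sum>e\<in>A. a e) / of_nat (card A) = ennreal ((\<Sum>e\<in>A. enn2real (a e)) / card A)"
    unfolding 1 using assms(2)
    by (simp add: ennreal_of_nat_eq_real_of_nat divide_ennreal sum_nonneg)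
  thus ?thesis by (simp add: sum_nonneg)
qed

lemma meas_cons:
  "(\<lambda>\<omega>. e ## \<omega>) \<in> measurable (walk_measure :: (int^'d) stream measure) walk_measure"
  unfolding walk_measure_def by measurable

lemma int_step:
  fixes f :: "(int^'d) stream \<Rightarrow> real"
  assumes f: "integrable walk_measure f"
  shows "(\<forall>e\<in>(unit_vecs :: (int^'d) set). integrable walk_measure (\<lambda>\<omega>. f (e ## \<omega>)))
     \<and> integral\<^sup>L walk_measure f = (\<Sum>e\<in>(unit_vecs :: (int^'d) set). \<integral>\<omega>. f (e ## \<omega>) \<partial>walk_measure) / card (unit_vecs :: (int^'d) set)"
proof -
  have fm: "f \<in> borel_measurable walk_measure" using f by auto
  have fem: "(\<lambda>\<omega>. f (e ## \<omega>)) \<in> borel_measurable walk_measure" for e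
    using measurable_comp[OF meas_cons fm] by (simp add: o_def)
  have cpos: "card (unit_vecs :: (int^'d) set) > 0" by (simp add: card_unit_vecs)
  have gen: "(\<integral>\<^sup>+\<omega>. g (e ## \<omega>) \<partial>walk_measure) < \<infinity>"
    if gm: "g \<in> borel_measurable walk_measure" and gf: "(\<integral>\<^sup>+\<omega>. g \<omega> \<partial>walk_measure) < \<infinity>"
      and e: "e \<in> (unit_vecs :: (int^'d) set)" for g :: "_ \<Rightarrow> ennreal" and e
  proof -
    have "(\<integral>\<^sup>+\<omega>. g (e ## \<omega>) \<partial>walk_measure) \<le> (\<Sum>e\<in>(unit_vecs :: (int^'d) set). \<integral>\<^sup>+\<omega>. g (e ## \<omega>) \<partial>walk_measure)"
      using e finite_unit_vecs by (intro member_le_sum) auto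
    also have "\<dots> = (\<integral>\<^sup>+\<omega>. g \<omega> \<partial>walk_measure) * of_nat (card (unit_vecs :: (int^'d) set))"
      using nn_step[OF gm] cpos
      by (simp add: ennreal_divide_times of_nat_less_top)
    also have "\<dots> < \<infinity>" using gf by (simp add: ennreal_mult_less_top of_nat_less_top)
    finally show ?thesis .
  qed
  have ie: "integrable walk_measure (\<lambda>\<omega>. f (e ## \<omega>))" if e: "e \<in> unit_vecs" for e
  proof -
    have "(\<integral>\<^sup>+\<omega>. ennreal (norm (f \<omega>)) \<partial>walk_measure) < \<infinity>" using f by (simp add: integrable_iff_bounded)
    hence "(\<integral>\<^sup>+\<omega>. ennreal (norm (f (e ## \<omega>))) \<partial>walk_measure) < \<infinity>"
      using gen[of "\<lambda>\<omega>. ennreal (norm (f \<omega>))" e] e fm by auto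
    thus ?thesis using fem by (simp add: integrable_iff_bounded)
  qed
  have pos: "(\<integral>\<^sup>+\<omega>. ennreal (h (e ## \<omega>)) \<partial>walk_measure) < \<infinity>"
    if "integrable walk_measure (\<lambda>\<omega>. h (e ## \<omega>))" for h :: "_ \<Rightarrow> real" and e
  proof -
    have "(\<integral>\<^sup>+\<omega>. ennreal (h (e ## \<omega>)) \<partial>walk_measure) \<le> (\<integral>\<^sup>+\<omega>. ennreal (norm (h (e ## \<omega>))) \<partial>walk_measure)"
      by (intro nn_integral_mono) auto
    also have "\<dots> < \<infinity>" using that by (simp add: integrable_iff_bounded)
    finally show ?thesis .
  qed
  have ie': "integrable walk_measure (\<lambda>\<omega>. - f (e ## \<omega>))" if "e \<in> unit_vecs" for e
    using ie[OF that] by auto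
  have "integral\<^sup>L walk_measure f = enn2real (\<integral>\<^sup>+x. f x \<partial>walk_measure) - enn2real (\<integral>\<^sup>+x. ennreal (- f x) \<partial>walk_measure)"
    by (rule real_lebesgue_integral_def[OF f])
  also have "enn2real (\<integral>\<^sup>+x. f x \<partial>walk_measure) = (\<Sum>e\<in>(unit_vecs :: (int^'d) set). enn2real (\<integral>\<^sup>+\<omega>. f (e ## \<omega>) \<partial>walk_measure)) / card (unit_vecs :: (int^'d) set)"
    using fm by (subst nn_step) (simp_all, rule enn_avg[OF finite_unit_vecs cpos pos[OF ie]])
  also have "enn2real (\<integral>\<^sup>+x. ennreal (- f x) \<partial>walk_measure) = (\<Sum>e\<in>(unit_vecs :: (int^'d) set). enn2real (\<integral>\<^sup>+\<omega>. ennreal (- f (e ## \<omega>)) \<partial>walk_measure)) / card (unit_vecs :: (int^'d) set)"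
    using fm by (subst nn_step) (simp_all, rule enn_avg[OF finite_unit_vecs cpos pos[OF ie']])
  also have "(\<Sum>e\<in>(unit_vecs :: (int^'d) set). enn2real (\<integral>\<^sup>+\<omega>. f (e ## \<omega>) \<partial>walk_measure)) / card (unit_vecs :: (int^'d) set)
     - (\<Sum>e\<in>(unit_vecs :: (int^'d) set). enn2real (\<integral>\<^sup>+\<omega>. ennreal (- f (e ## \<omega>)) \<partial>walk_measure)) / card (unit_vecs :: (int^'d) set)
     = (\<Sum>e\<in>(unit_vecs :: (int^'d) set). enn2real (\<integral>\<^sup>+\<omega>. f (e ## \<omega>) \<partial>walk_measure) - enn2real (\<integral>\<^sup>+\<omega>. ennreal (- f (e ## \<omega>)) \<partial>walk_measure)) / card (unit_vecs :: (int^'d) set)"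
    by (simp add: sum_subtractf diff_divide_distrib)
  also have "\<dots> = (\<Sum>e\<in>(unit_vecs :: (int^'d) set). \<integral>\<omega>. f (e ## \<omega>) \<partial>walk_measure) / card (unit_vecs :: (int^'d) set)"
    by (intro arg_cong2[where f="(/)"] sum.cong refl real_lebesgue_integral_def[symmetric] ie)
  finally show ?thesis using ie by blast
qed



lemma walkpos_0[simp]: "walkpos x \<omega> 0 = x" by (simp add: walkpos_def)
lemma walkpos_cons_Suc[simp]: "walkpos x (e ## \<omega>) (Suc j) = walkpos (x + e) \<omega> j"
  by (simp add: walkpos_def add.assoc)

lemma exit_out: "x \<notin> G \<Longrightarrow> exit_time G x \<omega> = Some 0"
  by (simp add: exit_time_Some_iff)

lemma exit_cons: assumes "x \<in> G"
  shows "exit_time G x (e ## \<omega>) = map_option Suc (exit_time G (x + e) \<omega>)"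
proof (cases "exit_time G (x + e) \<omega>")
  case None
  hence "\<forall>k. walkpos (x+e) \<omega> k \<in> G" by (simp add: exit_time_None_iff)
  hence "\<forall>k. walkpos x (e ## \<omega>) k \<in> G" using assms by (metis not0_implies_Suc walkpos_0 walkpos_cons_Suc)
  hence "exit_time G x (e ## \<omega>) = None" by (simp add: exit_time_None_iff)
  thus ?thesis using None by simp
next
  case (Some k)
  hence "walkpos (x+e) \<omega> k \<notin> G \<and> (\<forall>j<k. walkpos (x+e) \<omega> j \<in> G)" by (simp add: exit_time_Some_iff)
  hence "walkpos x (e ## \<omega>) (Suc k) \<notin> G \<and> (\<forall>j<Suc k. walkpos x (e ## \<omega>) j \<in> G)"
    using assms by (auto simp: less_Suc_eq_0_disj)
  hence "exit_time G x (e ## \<omega>) = Some (Suc k)" using exit_time_Some_iff[of G x "e ## \<omega>" "Suc k"] by blast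
  thus ?thesis using Some by simp
qed

lemma sig_Nil[simp]: "sig [] = tunit" by (simp add: sig_def)
lemma sig_Cons: "sig (v # vs) = tmult (texp (ivec v)) (sig vs)" by (simp add: sig_def)

lemma sig_level0: "sig vs 0 ws = 1"
  by (induction vs arbitrary: ws) (auto simp: sig_Cons tmult_def texp_def tunit_def)

lemma texp_bound: assumes "v \<in> unit_vecs" shows "\<bar>texp (ivec v) k l\<bar> \<le> 1"
proof -
  have "\<bar>\<Prod>w\<leftarrow>l. ivec v $ w\<bar> \<le> 1"
  proof (induction l)
    case (Cons a l)
    have "\<bar>ivec v $ a\<bar> \<le> 1" using unit_vecs_coord[OF assms, of a] by (simp add: ivec_def)
    thus ?case using Cons by (simp add: abs_mult mult_le_one)
  qed simp
  moreover have "(1::real) \<le> fact k" by simp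
  ultimately show ?thesis unfolding texp_def
    by (simp add: abs_div divide_le_eq_1) (meson fact_ge_1 order_trans)
qed

lemma sig_bound: "set vs \<subseteq> unit_vecs \<Longrightarrow> \<bar>sig vs n ws\<bar> \<le> (real (length vs) + 1) ^ n"
proof (induction vs arbitrary: n ws)
  case Nil thus ?case by (simp add: tunit_def)
next
  case (Cons v vs)
  let ?L = "real (length vs) + 1"
  have "\<bar>sig (v # vs) n ws\<bar> \<le> (\<Sum>k\<le>n. \<bar>texp (ivec v) k (take k ws) * sig vs (n - k) (drop k ws)\<bar>)"
    by (simp add: sig_Cons tmult_def sum_abs)
  also have "\<dots> \<le> (\<Sum>k\<le>n. of_nat (n choose k) * 1 ^ k * ?L ^ (n - k))"
  proof (intro sum_mono)
    fix k assume "k \<in> {..n}"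
    have t1: "\<bar>texp (ivec v) k (take k ws)\<bar> \<le> 1" using Cons.prems texp_bound by auto
    have t2: "\<bar>sig vs (n - k) (drop k ws)\<bar> \<le> ?L ^ (n - k)" using Cons by auto
    have t3: "(1::real) \<le> of_nat (n choose k)" using \<open>k \<in> {..n}\<close> by (simp add: Suc_leI zero_less_binomial)
    show "\<bar>texp (ivec v) k (take k ws) * sig vs (n - k) (drop k ws)\<bar> \<le> of_nat (n choose k) * 1 ^ k * ?L ^ (n - k)"
    proof -
      have L0: "0 \<le> ?L ^ (n - k)" by simp
      have "\<bar>texp (ivec v) k (take k ws) * sig vs (n - k) (drop k ws)\<bar> \<le> 1 * ?L ^ (n - k)"
        unfolding abs_mult by (rule mult_mono) (use t1 t2 in auto)
      also have "\<dots> \<le> of_nat (n choose k) * ?L ^ (n - k)"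
        by (rule mult_right_mono) (use t3 L0 in auto)
      finally show ?thesis by simp
    qed
  qed
  also have "\<dots> = (1 + ?L) ^ n" by (rule binomial_ring[symmetric])
  finally show ?case by simp
qed



lemma poly_geom_summable:
  assumes "0 \<le> \<rho>" "\<rho> < (1::real)"
  shows "summable (\<lambda>m. (real m + 2) ^ n * \<rho> ^ m)"
proof -
  define cc :: "nat \<Rightarrow> nat \<Rightarrow> real" where "cc k = (diffs ^^ k) (\<lambda>_. 1)" for k
  have cc_Suc: "cc (Suc k) = diffs (cc k)" for k by (simp add: cc_def)
  have sm: "\<And>x::real. norm x < 1 \<Longrightarrow> summable (\<lambda>m. cc k m * x ^ m)" for k
  proof (induction k)
    case 0 thus ?case by (simp add: cc_def)
  next
    case (Suc k)
    show ?case unfolding cc_Suc by (rule termdiff_converges[OF Suc.prems]) (use Suc.IH in auto)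
  qed
  have lb: "(real m + 1) ^ k \<le> cc k m" for k m
  proof (induction k arbitrary: m)
    case 0 thus ?case by (simp add: cc_def)
  next
    case (Suc k)
    have "(real m + 1) ^ Suc k = (real m + 1) * (real m + 1) ^ k" by simp
    also have "\<dots> \<le> (real m + 1) * (real (Suc m) + 1) ^ k"
      by (intro mult_left_mono power_mono) auto
    also have "\<dots> \<le> (real m + 1) * cc k (Suc m)"
      by (intro mult_left_mono Suc.IH) auto
    also have "\<dots> = cc (Suc k) m" by (simp add: cc_Suc diffs_def)
    finally show ?case .
  qed
  have s2: "summable (\<lambda>m. 2 ^ n * (cc n m * \<rho> ^ m))"
    by (rule summable_mult, rule sm) (use assms in auto)
  show ?thesis
  proof (rule summable_comparison_test[OF _ s2], intro exI allI impI)
    fix m :: nat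
    have "(real m + 2) ^ n \<le> (2 * (real m + 1)) ^ n" by (intro power_mono) auto
    also have "\<dots> = 2 ^ n * (real m + 1) ^ n" by (rule power_mult_distrib)
    also have "\<dots> \<le> 2 ^ n * cc n m" by (intro mult_left_mono lb) auto
    finally have "(real m + 2) ^ n * \<rho> ^ m \<le> 2 ^ n * cc n m * \<rho> ^ m"
      by (intro mult_right_mono) (use assms in auto)
    thus "norm ((real m + 2) ^ n * \<rho> ^ m) \<le> 2 ^ n * (cc n m * \<rho> ^ m)"
      using assms by (simp add: mult.assoc)
  qed
qed



definition e1 :: "int ^ 'd" where "e1 = uv (SOME i. True) 1"
definition pt :: "int ^ 'd \<Rightarrow> nat \<Rightarrow> int ^ 'd" where "pt x i = ((\<lambda>y. y + e1) ^^ i) x"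

lemma e1_in: "e1 \<in> unit_vecs" by (simp add: e1_def uv_in)

lemma pt_coord: "pt x i $ (SOME i. True) = x $ (SOME i. True) + int i"
  by (induction i) (auto simp: pt_def e1_def uv_def)

lemma pt_Suc: "pt x (Suc i) = pt (x + e1) i"
  by (simp only: pt_def funpow_Suc_right comp_def)

lemma pt_exit: assumes "finite G" shows "\<exists>i\<le>Suc (card G). pt x i \<notin> G"
proof (rule ccontr)
  assume "\<not> ?thesis"
  hence sub: "pt x ` {..Suc (card G)} \<subseteq> G" by auto
  have "inj_on (pt x) {..Suc (card G)}"
  proof (rule inj_onI)
    fix a b assume "pt x a = pt x b"
    hence "pt x a $ (SOME i. True) = pt x b $ (SOME i. True)" by simp
    thus "a = b" by (simp add: pt_coord)
  qed
  hence "card (pt x ` {..Suc (card G)}) = Suc (Suc (card G))" by (simp add: card_image)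
  moreover have "card (pt x ` {..Suc (card G)}) \<le> card G" using card_mono[OF assms sub] .
  ultimately show False by simp
qed

locale rrec =
  fixes G :: "(int^'d::finite) set" and r :: "nat \<Rightarrow> int^'d \<Rightarrow> real"
    and cU :: real and L :: nat and q :: real
  assumes fin: "finite G"
  and cU_def: "cU = real (card (unit_vecs::(int^'d) set))"
  and L_def: "L = Suc (card G)"
  and q_def: "q = 1 - (1 / cU) ^ L"
  and R0: "\<And>x. r 0 x = (if x \<in> G then 1 else 0)"
  and RS: "\<And>m x. r (Suc m) x = (if x \<in> G then (\<Sum>e\<in>unit_vecs. r m (x+e)) / cU else 0)"
begin

lemma e1U: "(e1::int^'d) \<in> unit_vecs" by (rule e1_in)

lemma c_ge2: "cU \<ge> 2" by (simp add: card_unit_vecs cU_def)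

lemma sum_one: "(\<Sum>e\<in>(unit_vecs::(int^'d) set). (1::real)) = cU" by (simp add: cU_def)

lemma r_bounds: "0 \<le> r m x \<and> r m x \<le> 1"
proof (induction m arbitrary: x)
  case 0 thus ?case by (simp add: R0)
next
  case (Suc m)
  have "(\<Sum>e\<in>unit_vecs. r m (x+e)) \<le> (\<Sum>e\<in>(unit_vecs::(int^'d) set). 1)"
    using Suc by (intro sum_mono) auto
  hence "(\<Sum>e\<in>unit_vecs. r m (x+e)) \<le> cU" by (simp only: sum_one)
  moreover have "0 \<le> (\<Sum>e\<in>unit_vecs. r m (x+e))" using Suc by (intro sum_nonneg) auto
  ultimately show ?case using c_ge2 by (auto simp: RS divide_le_eq_1)
qed

lemma r_out: "x \<notin> G \<Longrightarrow> r m x = 0"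
  by (cases m) (auto simp: R0 RS)

lemma r_mono: "r (Suc m) x \<le> r m x"
proof (induction m arbitrary: x)
  case 0 thus ?case using r_bounds[of 1 x] by (simp add: R0 r_out)
next
  case (Suc m)
  have "(\<Sum>e\<in>unit_vecs. r (Suc m) (x+e)) \<le> (\<Sum>e\<in>unit_vecs. r m (x+e))"
    using Suc by (intro sum_mono) auto
  thus ?case using c_ge2 by (auto simp: RS[of "Suc m"] RS[of m] divide_right_mono)
qed

lemma r_antimono: "r (a + d) x \<le> r a x"
proof (induction d)
  case (Suc d)
  have "r (Suc (a + d)) x \<le> r (a + d) x" by (rule r_mono)
  thus ?case using Suc.IH by simp
qed simp

lemma r_mult: assumes "\<And>y. r m y \<le> C" "0 \<le> C" shows "r (m + j) x \<le> C * r j x"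
proof (induction j arbitrary: x)
  case 0 thus ?case using assms by (auto simp: R0 r_out)
next
  case (Suc j)
  have "(\<Sum>e\<in>unit_vecs. r (m + j) (x+e)) \<le> (\<Sum>e\<in>unit_vecs. C * r j (x+e))"
    using Suc by (intro sum_mono) auto
  hence "(\<Sum>e\<in>unit_vecs. r (m + j) (x+e)) / cU \<le> C * ((\<Sum>e\<in>unit_vecs. r j (x+e)) / cU)"
    using c_ge2 by (simp add: sum_distrib_left[symmetric] divide_right_mono)
  thus ?case by (simp add: RS)
qed

lemma r_exit: "(\<exists>i\<le>j. pt x i \<notin> G) \<Longrightarrow> r j x \<le> 1 - (1 / cU) ^ j"
proof (induction j arbitrary: x)
  case 0 thus ?case by (simp add: R0 pt_def)
next
  case (Suc j)
  have d1: "(1 / cU) ^ Suc j \<le> 1" using c_ge2 by (intro power_le_one) auto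
  show ?case
  proof (cases "x \<in> G")
    case False thus ?thesis using d1 by (simp add: r_out)
  next
    case True
    then obtain i where i: "i \<le> Suc j" "pt x i \<notin> G" using Suc.prems by auto
    have "i \<noteq> 0"
    proof
      assume "i = 0" thus False using i True by (simp add: pt_def)
    qed
    then obtain i' where "i = Suc i'" by (cases i) auto
    hence "\<exists>i\<le>j. pt (x + e1) i \<notin> G" using i by (auto simp: pt_Suc)
    hence h1: "r j (x + e1) \<le> 1 - (1/cU)^j" by (rule Suc.IH)
    have "(\<Sum>e\<in>unit_vecs. r j (x+e)) = r j (x + e1) + (\<Sum>e\<in>unit_vecs - {e1}. r j (x+e))"
      using e1_in finite_unit_vecs by (rule sum.remove[rotated])
    also have "(\<Sum>e\<in>unit_vecs - {e1}. r j (x+e)) \<le> (\<Sum>e\<in>(unit_vecs::(int^'d) set) - {e1}. 1)"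
      using r_bounds by (intro sum_mono) auto
    also have "(\<Sum>e\<in>(unit_vecs::(int^'d) set) - {e1}. 1) = cU - 1"
    proof -
      have "card (unit_vecs::(int^'d) set) \<ge> 1" by (simp add: card_unit_vecs)
      thus ?thesis by (simp add: card_Diff_singleton[OF e1U] of_nat_diff cU_def)
    qed
    finally have "(\<Sum>e\<in>unit_vecs. r j (x+e)) \<le> cU - (1/cU)^j" using h1 by simp
    hence "(\<Sum>e\<in>unit_vecs. r j (x+e)) / cU \<le> (cU - (1/cU)^j) / cU"
      using c_ge2 by (intro divide_right_mono) auto
    also have "\<dots> = 1 - (1/cU)^Suc j" using c_ge2 by (simp add: field_simps)
    finally show ?thesis using True by (simp add: RS)
  qed
qed

lemma q_bounds: "0 < q" "q < 1"
proof -
  have L1: "1 \<le> L" by (simp add: L_def)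
  have "(1/cU) ^ L \<le> (1/cU) ^ 1" using c_ge2 by (intro power_decreasing[OF L1]) auto
  moreover have "1/cU \<le> 1/2" using c_ge2 by (simp add: field_simps)
  ultimately show "0 < q" unfolding q_def by simp
  have "0 < (1/cU) ^ L" using c_ge2 by simp
  thus "q < 1" unfolding q_def by simp
qed

lemma r_L: "r L x \<le> q"
proof -
  have "\<exists>i\<le>Suc (card G). pt x i \<notin> G" by (rule pt_exit[OF fin])
  hence "\<exists>i\<le>L. pt x i \<notin> G" by (simp only: L_def)
  from r_exit[OF this] show ?thesis unfolding q_def .
qed

lemma r_block: "r (k * L) x \<le> q ^ k"
proof (induction k arbitrary: x)
  case 0 thus ?case using r_bounds by simp
next
  case (Suc k)
  have "r (k * L + L) x \<le> q ^ k * r L x"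
    by (rule r_mult) (use Suc q_bounds in auto)
  also have "\<dots> \<le> q ^ k * q" using r_L q_bounds by (intro mult_left_mono) auto
  finally have "r (k * L + L) x \<le> q ^ k * q" .
  moreover have "Suc k * L = k * L + L" by simp
  ultimately show ?case by (simp only: power_Suc2)
qed

lemma r_tail: "r m x \<le> q ^ (m div L)"
proof -
  have "r ((m div L) * L + m mod L) x \<le> r ((m div L) * L) x" by (rule r_antimono)
  hence "r m x \<le> r ((m div L) * L) x" by (simp only: div_mult_mod_eq)
  also have "\<dots> \<le> q ^ (m div L)" by (rule r_block)
  finally show ?thesis .
qed

lemma r_summable: "summable (\<lambda>m. (real m + 2) ^ n * r m x)"
proof -
  have L0: "0 < L" by (simp add: L_def)
  define \<rho> where "\<rho> = root L q"
  have \<rho>0: "0 \<le> \<rho>" and \<rho>1: "\<rho> < 1" and \<rho>L: "\<rho> ^ L = q"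
    using q_bounds L0 by (auto simp: \<rho>_def real_root_ge_zero)
  have key: "q ^ (m div L) \<le> \<rho> ^ m / q" for m
  proof -
    have "\<rho> ^ (L * (m div L + 1)) = q ^ (m div L) * q"
      by (simp only: power_mult \<rho>L power_add power_one_right)
    moreover have "\<rho> ^ (L * (m div L + 1)) \<le> \<rho> ^ m"
    proof (rule power_decreasing)
      have "m div L * L + m mod L = m" by (rule div_mult_mod_eq)
      moreover have "m mod L < L" using L0 by simp
      moreover have "L * (m div L + 1) = m div L * L + L" by (simp add: algebra_simps)
      ultimately show "m \<le> L * (m div L + 1)" by linarith
    qed (use \<rho>0 \<rho>1 in auto)
    ultimately have "q ^ (m div L) * q \<le> \<rho> ^ m" by simp
    thus ?thesis using q_bounds by (simp add: field_simps)
  qed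
  have s: "summable (\<lambda>m. (1/q) * ((real m + 2) ^ n * \<rho> ^ m))"
    by (rule summable_mult, rule poly_geom_summable[OF \<rho>0 \<rho>1])
  show ?thesis
  proof (rule summable_comparison_test[OF _ s], intro exI allI impI)
    fix m
    have "r m x \<le> \<rho> ^ m / q" using r_tail key by (rule order_trans)
    hence "(real m + 2) ^ n * r m x \<le> (real m + 2) ^ n * (\<rho> ^ m / q)"
      by (intro mult_left_mono) auto
    thus "norm ((real m + 2) ^ n * r m x) \<le> (1/q) * ((real m + 2) ^ n * \<rho> ^ m)"
      using r_bounds by (simp add: abs_mult)
  qed
qed

end


definition Aset :: "(int^'d) set \<Rightarrow> int^'d \<Rightarrow> nat \<Rightarrow> (int^'d) stream set" where
  "Aset G x m = {\<omega>. \<forall>k\<le>m. walkpos x \<omega> k \<in> G}"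

definition rm :: "(int^'d) set \<Rightarrow> nat \<Rightarrow> int^'d \<Rightarrow> real" where
  "rm G m x = measure walk_measure (Aset G x m)"

lemma Aset_meas: "Aset G x m \<in> sets (walk_measure :: (int^'d::finite) stream measure)"
proof -
  let ?h = "\<lambda>l. \<forall>k\<le>m. x + sum_list (take k l) \<in> G"
  have "Measurable.pred (walk_measure :: (int^'d) stream measure) (\<lambda>\<omega>. ?h (stake m \<omega>))"
    by (rule meas_stake) simp
  moreover have "?h (stake m \<omega>) = (\<omega> \<in> Aset G x m)" for \<omega>
    by (auto simp: Aset_def walkpos_stake[of _ m])
  ultimately have "Measurable.pred (walk_measure :: (int^'d) stream measure) (\<lambda>\<omega>. \<omega> \<in> Aset G x m)"
    by simp
  thus ?thesis by (simp add: pred_def space_walk)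
qed

lemma Aset_0: "Aset G x 0 = (if x \<in> G then UNIV else {})"
  by (auto simp: Aset_def)

lemma Aset_cons: "(e ## \<omega> \<in> Aset G x (Suc m)) = (x \<in> G \<and> \<omega> \<in> Aset G (x + e) m)"
  unfolding Aset_def
proof safe
  fix k assume "\<forall>k\<le>Suc m. walkpos x (e ## \<omega>) k \<in> G" "k \<le> m"
  thus "walkpos (x + e) \<omega> k \<in> G" by (metis Suc_le_mono walkpos_cons_Suc)
next
  assume "\<forall>k\<le>Suc m. walkpos x (e ## \<omega>) k \<in> G" thus "x \<in> G" by (metis le0 walkpos_0)
next
  fix k assume "x \<in> G" "\<forall>k\<le>m. walkpos (x + e) \<omega> k \<in> G" "k \<le> Suc m"
  thus "walkpos x (e ## \<omega>) k \<in> G" by (cases k) auto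
qed

lemma rm_0: fixes G :: "(int^'d::finite) set" shows "rm G 0 x = (if x \<in> G then 1 else 0)"
proof -
  interpret W: prob_space "walk_measure :: (int^'d) stream measure" by (rule prob_walk)
  show ?thesis using W.prob_space by (simp add: rm_def Aset_0 space_walk)
qed

lemma rm_Suc: fixes G :: "(int^'d::finite) set" shows "rm G (Suc m) (x::int^'d::finite) = (if x \<in> G then (\<Sum>e\<in>unit_vecs. rm G m (x+e)) / real (card (unit_vecs::(int^'d) set)) else 0)"
proof -
  interpret W: prob_space "walk_measure :: (int^'d) stream measure" by (rule prob_walk)
  have "emeasure walk_measure (Aset G x (Suc m)) = (\<integral>\<^sup>+\<omega>. indicator (Aset G x (Suc m)) \<omega> \<partial>walk_measure)"
    by (rule nn_integral_indicator[symmetric, OF Aset_meas])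
  also have "\<dots> = (\<Sum>e\<in>(unit_vecs::(int^'d) set). \<integral>\<^sup>+\<omega>. indicator (Aset G x (Suc m)) (e ## \<omega>) \<partial>walk_measure) / card (unit_vecs::(int^'d) set)"
    by (rule nn_step) (rule borel_measurable_indicator[OF Aset_meas])
  also have "\<dots> = (\<Sum>e\<in>(unit_vecs::(int^'d) set). if x \<in> G then emeasure walk_measure (Aset G (x + e) m) else 0) / card (unit_vecs::(int^'d) set)"
  proof -
    have "(\<integral>\<^sup>+\<omega>. indicator (Aset G x (Suc m)) (e ## \<omega>) \<partial>walk_measure) = (if x \<in> G then emeasure walk_measure (Aset G (x + e) m) else 0)" for e
    proof -
      have "(\<integral>\<^sup>+\<omega>. indicator (Aset G x (Suc m)) (e ## \<omega>) \<partial>walk_measure) = (\<integral>\<^sup>+\<omega>. (if x \<in> G then indicator (Aset G (x + e) m) \<omega> else 0) \<partial>walk_measure)"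
        by (intro nn_integral_cong) (simp add: indicator_def Aset_cons)
      also have "\<dots> = (if x \<in> G then emeasure walk_measure (Aset G (x + e) m) else 0)"
        by (simp add: nn_integral_indicator[OF Aset_meas])
      finally show ?thesis .
    qed
    thus ?thesis by simp
  qed
  finally have em: "emeasure walk_measure (Aset G x (Suc m)) = (\<Sum>e\<in>(unit_vecs::(int^'d) set). if x \<in> G then emeasure walk_measure (Aset G (x + e) m) else 0) / card (unit_vecs::(int^'d) set)" .
  show ?thesis
  proof (cases "x \<in> G")
    case False
    thus ?thesis using em by (simp add: rm_def W.emeasure_eq_measure)
  next
    case True
    have "rm G (Suc m) x = enn2real (emeasure walk_measure (Aset G x (Suc m)))"
      by (simp add: rm_def W.emeasure_eq_measure)
    also have "\<dots> = (\<Sum>e\<in>(unit_vecs::(int^'d) set). enn2real (emeasure walk_measure (Aset G (x + e) m))) / card (unit_vecs::(int^'d) set)"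
      unfolding em using True
      by (simp, intro enn_avg finite_unit_vecs) (auto simp: card_unit_vecs W.emeasure_eq_measure)
    also have "\<dots> = (\<Sum>e\<in>unit_vecs. rm G m (x+e)) / real (card (unit_vecs::(int^'d) set))"
      by (simp add: rm_def W.emeasure_eq_measure)
    finally show ?thesis using True by simp
  qed
qed

lemma rrec_rm: fixes G :: "(int^'d::finite) set" shows "finite G \<Longrightarrow> rrec G (rm G) (real (card (unit_vecs::(int^'d::finite) set))) (Suc (card G))
    (1 - (1 / real (card (unit_vecs::(int^'d) set))) ^ Suc (card G))"
  by unfold_locales (auto simp: rm_0 rm_Suc)

lemma moment:
  fixes G :: "(int^'d::finite) set"
  assumes fin: "finite G"
  shows "(\<integral>\<^sup>+\<omega>. (case exit_time G x \<omega> of Some t \<Rightarrow> ennreal ((real t + 1) ^ n) | None \<Rightarrow> 0) \<partial>walk_measure) < \<infinity>"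
proof -
  interpret W: prob_space "walk_measure :: (int^'d) stream measure" by (rule prob_walk)
  interpret R: rrec G "rm G" "real (card (unit_vecs::(int^'d::finite) set))" "Suc (card G)"
    "1 - (1 / real (card (unit_vecs::(int^'d) set))) ^ Suc (card G)"
    by (rule rrec_rm[OF fin])
  have [measurable]: "Aset G x m \<in> sets walk_measure" for m by (rule Aset_meas)
  let ?c = "\<lambda>m. ennreal ((real m + 2) ^ n)"
  have pw: "(case exit_time G x \<omega> of Some t \<Rightarrow> ennreal ((real t + 1) ^ n) | None \<Rightarrow> 0)
      \<le> 1 + (\<Sum>m. ?c m * indicator (Aset G x m) \<omega>)" for \<omega>
  proof (cases "exit_time G x \<omega>")
    case None thus ?thesis by simp
  next
    case (Some t)
    show ?thesis
    proof (cases t)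
      case 0 thus ?thesis using Some by simp
    next
      case (Suc s)
      have "\<omega> \<in> Aset G x s" using Some Suc by (auto simp: exit_time_Some_iff Aset_def)
      hence "ennreal ((real t + 1) ^ n) = ?c s * indicator (Aset G x s) \<omega>" using Suc by (simp add: algebra_simps)
      also have "\<dots> = (\<Sum>m\<in>{s}. ?c m * indicator (Aset G x m) \<omega>)" by (subst sum.insert) simp_all
      also have "\<dots> \<le> (\<Sum>m. ?c m * indicator (Aset G x m) \<omega>)"
        by (rule sum_le_suminf) (auto intro: summableI)
      finally have "ennreal ((real t + 1) ^ n) \<le> (\<Sum>m. ?c m * indicator (Aset G x m) \<omega>)" .
      thus ?thesis using Some by (simp add: add_increasing)
    qed
  qed
  have "(\<integral>\<^sup>+\<omega>. (case exit_time G x \<omega> of Some t \<Rightarrow> ennreal ((real t + 1) ^ n) | None \<Rightarrow> 0) \<partial>walk_measure)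
      \<le> (\<integral>\<^sup>+\<omega>. 1 + (\<Sum>m. ?c m * indicator (Aset G x m) \<omega>) \<partial>walk_measure)"
    by (rule nn_integral_mono) (rule pw)
  also have "\<dots> = 1 + (\<Sum>m. ?c m * emeasure walk_measure (Aset G x m))"
    using W.emeasure_space_1 unfolding space_walk
    by (subst nn_integral_add) (auto simp: nn_integral_suminf nn_integral_cmult_indicator[OF Aset_meas] space_walk)
  also have "(\<Sum>m. ?c m * emeasure walk_measure (Aset G x m)) = (\<Sum>m. ennreal ((real m + 2) ^ n * rm G m x))"
    by (simp add: W.emeasure_eq_measure rm_def ennreal_mult'')
  also have "\<dots> = ennreal (\<Sum>m. (real m + 2) ^ n * rm G m x)"
    by (rule suminf_ennreal2) (use R.r_bounds R.r_summable in auto)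
  also have "1 + \<dots> < \<infinity>" by simp
  finally show ?thesis .
qed



definition FF :: "(int^'d) set \<Rightarrow> int^'d \<Rightarrow> nat \<Rightarrow> 'd list \<Rightarrow> (int^'d) stream \<Rightarrow> real" where
  "FF G x n ws \<omega> = (case exit_time G x \<omega> of Some t \<Rightarrow> sig (stake t \<omega>) n ws | None \<Rightarrow> 0)"

definition BB :: "(int^'d) set \<Rightarrow> int^'d \<Rightarrow> nat \<Rightarrow> (int^'d) stream \<Rightarrow> real" where
  "BB G x n \<omega> = (case exit_time G x \<omega> of Some t \<Rightarrow> (real t + 1) ^ n | None \<Rightarrow> 0)"

lemma Phi_FF: "Phi G x n ws = integral\<^sup>L walk_measure (FF G x n ws)"
  unfolding Phi_def FF_def by (rule refl)

lemma BB_meas: "BB G x n \<in> borel_measurable (walk_measure :: (int^'d::finite) stream measure)"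
  unfolding BB_def by (rule meas_case_exit) auto

lemma BB_int:
  fixes G :: "(int^'d::finite) set"
  assumes "finite G" shows "integrable walk_measure (BB G x n)"
proof -
  have "(\<integral>\<^sup>+\<omega>. ennreal (norm (BB G x n \<omega>)) \<partial>walk_measure) =
     (\<integral>\<^sup>+\<omega>. (case exit_time G x \<omega> of Some t \<Rightarrow> ennreal ((real t + 1) ^ n) | None \<Rightarrow> 0) \<partial>walk_measure)"
    by (intro nn_integral_cong) (auto simp: BB_def split: option.splits)
  also have "\<dots> < \<infinity>" by (rule moment[OF assms])
  finally show ?thesis using BB_meas by (simp add: integrable_iff_bounded)
qed

lemma FF_meas: "FF G x n ws \<in> borel_measurable (walk_measure :: (int^'d::finite) stream measure)"
  unfolding FF_def by (rule meas_case_exit) (auto intro!: meas_stake)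

lemma FF_int:
  fixes G :: "(int^'d::finite) set"
  assumes "finite G" shows "integrable walk_measure (FF G x n ws)"
proof (rule Bochner_Integration.integrable_bound[OF BB_int[OF assms] FF_meas])
  show "AE \<omega> in walk_measure. norm (FF G x n ws \<omega>) \<le> norm (BB G x n \<omega>)"
    using AE_units
  proof eventually_elim
    case (elim \<omega>)
    show ?case
    proof (cases "exit_time G x \<omega>")
      case (Some t)
      have "set (stake t \<omega>) \<subseteq> unit_vecs" using elim by (auto simp: in_set_conv_nth)
      from sig_bound[OF this, of n ws] show ?thesis using Some by (simp add: FF_def BB_def)
    qed (simp add: FF_def BB_def)
  qed
qed

lemma Phi_out: "x \<notin> G \<Longrightarrow> Phi G (x::int^'d::finite) n ws = tunit n ws"
proof -
  interpret W: prob_space "walk_measure :: (int^'d) stream measure" by (rule prob_walk)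
  assume "x \<notin> G"
  hence "FF G x n ws = (\<lambda>_. tunit n ws)" by (auto simp: FF_def exit_out)
  thus ?thesis using W.prob_space by (simp add: Phi_FF)
qed

lemma FF_cons: "x \<in> G \<Longrightarrow> FF G x n ws (e ## \<omega>) =
   (\<Sum>k\<le>n. texp (ivec e) k (take k ws) * FF G (x + e) (n - k) (drop k ws) \<omega>)"
  by (cases "exit_time G (x + e) \<omega>")
     (auto simp: FF_def exit_cons sig_Cons tmult_def)

lemma Phi_in:
  fixes G :: "(int^'d::finite) set"
  assumes fin: "finite G" and x: "x \<in> G"
  shows "Phi G x n ws = (\<Sum>e\<in>unit_vecs. \<Sum>k\<le>n. texp (ivec e) k (take k ws) * Phi G (x + e) (n - k) (drop k ws))
      / real (card (unit_vecs :: (int^'d) set))"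
proof -
  have "Phi G x n ws = (\<Sum>e\<in>(unit_vecs :: (int^'d) set). \<integral>\<omega>. FF G x n ws (e ## \<omega>) \<partial>walk_measure) / card (unit_vecs :: (int^'d) set)"
    unfolding Phi_FF using int_step[OF FF_int[OF fin]] by blast
  also have "\<dots> = (\<Sum>e\<in>unit_vecs. \<Sum>k\<le>n. texp (ivec e) k (take k ws) * Phi G (x + e) (n - k) (drop k ws))
      / real (card (unit_vecs :: (int^'d) set))"
  proof (intro arg_cong2[where f="(/)"] sum.cong refl)
    fix e :: "int^'d"
    have "(\<integral>\<omega>. FF G x n ws (e ## \<omega>) \<partial>walk_measure) =
        (\<integral>\<omega>. (\<Sum>k\<le>n. texp (ivec e) k (take k ws) * FF G (x + e) (n - k) (drop k ws) \<omega>) \<partial>walk_measure)"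
      using x by (simp add: FF_cons)
    also have "\<dots> = (\<Sum>k\<le>n. \<integral>\<omega>. texp (ivec e) k (take k ws) * FF G (x + e) (n - k) (drop k ws) \<omega> \<partial>walk_measure)"
      by (rule Bochner_Integration.integral_sum) (simp add: FF_int[OF fin])
    also have "\<dots> = (\<Sum>k\<le>n. texp (ivec e) k (take k ws) * Phi G (x + e) (n - k) (drop k ws))"
      by (simp add: Phi_FF FF_int[OF fin])
    finally show "(\<integral>\<omega>. FF G x n ws (e ## \<omega>) \<partial>walk_measure) = (\<Sum>k\<le>n. texp (ivec e) k (take k ws) * Phi G (x + e) (n - k) (drop k ws))" .
  qed
  finally show ?thesis .
qed



definition HH :: "(int^'d) set \<Rightarrow> (int^'d \<Rightarrow> real) \<Rightarrow> int^'d \<Rightarrow> (int^'d) stream \<Rightarrow> real" where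
  "HH G g x \<omega> = (case exit_time G x \<omega> of Some t \<Rightarrow> (\<Sum>j<t. g (walkpos x \<omega> j)) | None \<Rightarrow> 0)"

lemma HH_meas: "HH G g x \<in> borel_measurable (walk_measure :: (int^'d::finite) stream measure)"
  unfolding HH_def
proof (rule meas_case_exit)
  fix t
  let ?h = "\<lambda>l. \<Sum>j<t. g (x + sum_list (take j l))"
  have "(\<lambda>\<omega>. ?h (stake t \<omega>)) \<in> borel_measurable (walk_measure :: (int^'d::finite) stream measure)"
    by (rule meas_stake) simp
  moreover have "?h (stake t \<omega>) = (\<Sum>j<t. g (walkpos x \<omega> j))" for \<omega>
    by (intro sum.cong refl) (simp add: walkpos_stake[of _ t])
  ultimately show "(\<lambda>\<omega>. \<Sum>j<t. g (walkpos x \<omega> j)) \<in> borel_measurable walk_measure" by simp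
qed simp

lemma HH_int:
  fixes G :: "(int^'d::finite) set"
  assumes fin: "finite G" shows "integrable walk_measure (HH G g x)"
proof -
  define C where "C = (\<Sum>y\<in>G. \<bar>g y\<bar>)"
  have C: "\<bar>g y\<bar> \<le> C" if "y \<in> G" for y
    unfolding C_def using that fin by (intro member_le_sum) auto
  have C0: "0 \<le> C" unfolding C_def by (intro sum_nonneg) auto
  show ?thesis
  proof (rule Bochner_Integration.integrable_bound[OF integrable_mult_right[OF BB_int[OF fin]] HH_meas])
    show "AE \<omega> in walk_measure. norm (HH G g x \<omega>) \<le> norm (C * BB G x 1 \<omega>)"
    proof (rule AE_I2)
      fix \<omega>
      show "norm (HH G g x \<omega>) \<le> norm (C * BB G x 1 \<omega>)"
      proof (cases "exit_time G x \<omega>")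
        case (Some t)
        hence inG: "walkpos x \<omega> j \<in> G" if "j < t" for j using that by (simp add: exit_time_Some_iff)
        have "\<bar>\<Sum>j<t. g (walkpos x \<omega> j)\<bar> \<le> (\<Sum>j<t. \<bar>g (walkpos x \<omega> j)\<bar>)" by (rule sum_abs)
        also have "\<dots> \<le> (\<Sum>j<t. C)" using inG C by (intro sum_mono) auto
        also have "\<dots> \<le> C * (real t + 1)" using C0 by (simp add: algebra_simps)
        finally show ?thesis using Some C0 by (simp add: HH_def BB_def abs_mult)
      qed (simp add: HH_def BB_def)
    qed
  qed
qed

lemma HH_out: "x \<notin> G \<Longrightarrow> integral\<^sup>L walk_measure (HH G g (x::int^'d::finite)) = 0"
proof -
  assume "x \<notin> G"
  hence "HH G g x = (\<lambda>_. 0)" by (auto simp: HH_def exit_out)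
  thus ?thesis by simp
qed

lemma HH_cons: "x \<in> G \<Longrightarrow> HH G g x (e ## \<omega>) = g x * FF G (x + e) 0 [] \<omega> + HH G g (x + e) \<omega>"
  by (cases "exit_time G (x + e) \<omega>")
     (auto simp del: sum.lessThan_Suc simp add: HH_def FF_def exit_cons sig_level0 sum.lessThan_Suc_shift)

lemma HH_in:
  fixes G :: "(int^'d::finite) set"
  assumes fin: "finite G" and x: "x \<in> G"
  shows "integral\<^sup>L walk_measure (HH G g x) =
    (\<Sum>e\<in>unit_vecs. g x * Phi G (x + e) 0 [] + integral\<^sup>L walk_measure (HH G g (x + e))) / real (card (unit_vecs :: (int^'d) set))"
proof -
  have "integral\<^sup>L walk_measure (HH G g x) = (\<Sum>e\<in>(unit_vecs :: (int^'d) set). \<integral>\<omega>. HH G g x (e ## \<omega>) \<partial>walk_measure) / card (unit_vecs :: (int^'d) set)"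
    using int_step[OF HH_int[OF fin]] by blast
  also have "\<dots> = (\<Sum>e\<in>unit_vecs. g x * Phi G (x + e) 0 [] + integral\<^sup>L walk_measure (HH G g (x + e))) / real (card (unit_vecs :: (int^'d) set))"
  proof (intro arg_cong2[where f="(/)"] sum.cong refl)
    fix e :: "int^'d"
    have "(\<integral>\<omega>. HH G g x (e ## \<omega>) \<partial>walk_measure) = (\<integral>\<omega>. g x * FF G (x + e) 0 [] \<omega> + HH G g (x + e) \<omega> \<partial>walk_measure)"
      using x by (simp add: HH_cons)
    also have "\<dots> = (\<integral>\<omega>. g x * FF G (x + e) 0 [] \<omega> \<partial>walk_measure) + integral\<^sup>L walk_measure (HH G g (x + e))"
      by (rule Bochner_Integration.integral_add) (auto intro: FF_int[OF fin] HH_int[OF fin])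
    also have "\<dots> = g x * Phi G (x + e) 0 [] + integral\<^sup>L walk_measure (HH G g (x + e))"
      by (simp add: Phi_FF FF_int[OF fin])
    finally show "(\<integral>\<omega>. HH G g x (e ## \<omega>) \<partial>walk_measure) = g x * Phi G (x + e) 0 [] + integral\<^sup>L walk_measure (HH G g (x + e))" .
  qed
  finally show ?thesis .
qed

lemma pt_Suc': "pt x (Suc k) = pt x k + e1" by (simp add: pt_def)

lemma harm_le0:
  fixes G :: "(int^'d::finite) set" and h :: "int^'d \<Rightarrow> real"
  assumes fin: "finite G" and out: "\<And>x. x \<notin> G \<Longrightarrow> h x = 0"
    and harm: "\<And>x. x \<in> G \<Longrightarrow> h x = (\<Sum>e\<in>unit_vecs. h (x + e)) / real (card (unit_vecs :: (int^'d) set))"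
  shows "h x \<le> 0"
proof (rule ccontr)
  assume "\<not> h x \<le> 0"
  hence hx: "h x > 0" by simp
  hence xG: "x \<in> G" using out by force
  define M where "M = Max (h ` G)"
  have Mge: "h y \<le> M" if "y \<in> G" for y unfolding M_def using fin that by simp
  have M0: "M > 0" using Mge[OF xG] hx by simp
  have le: "h y \<le> M" for y using Mge out M0 by (cases "y \<in> G") force+
  have "M \<in> h ` G" unfolding M_def using fin xG by (intro Max_in) auto
  then obtain x0 where x0: "x0 \<in> G" "h x0 = M" by (metis imageE)
  let ?c = "real (card (unit_vecs :: (int^'d) set))"
  have c2: "?c \<ge> 2" by (simp add: card_unit_vecs)
  have e1U: "(e1::int^'d) \<in> unit_vecs" by (rule e1_in)
  have step: "h (y + e1) = M" if "h y = M" for y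
  proof -
    have yG: "y \<in> G" using that out M0 by force
    have "(\<Sum>e\<in>unit_vecs. h (y + e)) = ?c * M" using harm[OF yG] that c2 by (simp add: field_simps)
    moreover have "(\<Sum>e\<in>unit_vecs. h (y + e)) = h (y + e1) + (\<Sum>e\<in>unit_vecs - {e1}. h (y + e))"
      using e1U finite_unit_vecs by (rule sum.remove[rotated])
    moreover have "(\<Sum>e\<in>(unit_vecs :: (int^'d) set) - {e1}. h (y + e)) \<le> (\<Sum>e\<in>(unit_vecs :: (int^'d) set) - {e1}. M)"
      using le by (intro sum_mono) auto
    moreover have "(\<Sum>e\<in>(unit_vecs :: (int^'d) set) - {e1}. M) = (?c - 1) * M"
    proof -
      have "card (unit_vecs::(int^'d) set) \<ge> 1" by (simp add: card_unit_vecs)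
      thus ?thesis by (simp add: card_Diff_singleton[OF e1U] of_nat_diff)
    qed
    ultimately have "h (y + e1) \<ge> M" by (simp add: algebra_simps)
    thus ?thesis using le[of "y + e1"] by simp
  qed
  have all: "h (pt x0 k) = M" for k
    by (induction k) (auto simp: pt_def[of x0 0] x0 pt_Suc' step)
  have sub: "range (pt x0) \<subseteq> G" using all out M0 by (force)
  have "inj (pt x0)"
  proof (rule injI)
    fix a b assume "pt x0 a = pt x0 b"
    hence "pt x0 a $ (SOME i. True) = pt x0 b $ (SOME i. True)" by simp
    thus "a = b" by (simp add: pt_coord)
  qed
  hence "infinite (range (pt x0))" by (simp add: finite_image_iff)
  thus False using sub fin finite_subset by blast
qed

lemma harm_zero:
  fixes G :: "(int^'d::finite) set" and h :: "int^'d \<Rightarrow> real"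
  assumes fin: "finite G" and out: "\<And>x. x \<notin> G \<Longrightarrow> h x = 0"
    and harm: "\<And>x. x \<in> G \<Longrightarrow> h x = (\<Sum>e\<in>unit_vecs. h (x + e)) / real (card (unit_vecs :: (int^'d) set))"
  shows "h x = 0"
proof -
  have "h x \<le> 0" by (rule harm_le0[OF fin out harm])
  moreover have "- h x \<le> 0"
  proof (rule harm_le0[OF fin, where h="\<lambda>x. - h x"])
    show "- h y = (\<Sum>e\<in>unit_vecs. - h (y + e)) / real (card (unit_vecs :: (int^'d) set))" if "y \<in> G" for y
      using harm[OF that] by (simp add: sum_negf)
  qed (use out in auto)
  ultimately show ?thesis by simp
qed



lemma sum_atMost_split0: fixes n :: nat shows "(\<Sum>k\<le>n. f k) = f 0 + (\<Sum>k=1..n. f k)"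
proof -
  have "{..n} = insert 0 {1..n}" by auto
  thus ?thesis by simp
qed

lemma Phi0:
  fixes G :: "(int^'d::finite) set"
  assumes fin: "finite G" shows "Phi G x 0 [] = 1"
proof -
  let ?c = "real (card (unit_vecs :: (int^'d) set))"
  have c2: "?c \<ge> 2" by (simp add: card_unit_vecs)
  have "(\<lambda>y. Phi G y 0 [] - 1) x = 0"
  proof (rule harm_zero[OF fin])
    show "Phi G y 0 [] - 1 = 0" if "y \<notin> G" for y using that by (simp add: Phi_out tunit_def)
    fix y assume y: "y \<in> G"
    have "Phi G y 0 [] = (\<Sum>e\<in>unit_vecs. Phi G (y + e) 0 []) / ?c"
      by (subst Phi_in[OF fin y]) (simp add: texp_def)
    thus "Phi G y 0 [] - 1 = (\<Sum>e\<in>unit_vecs. Phi G (y + e) 0 [] - 1) / ?c"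
      using c2 by (simp add: sum_subtractf diff_divide_distrib)
  qed
  thus ?thesis by simp
qed

lemma Phi1:
  fixes G :: "(int^'d::finite) set"
  assumes fin: "finite G" and len: "length ws = 1" shows "Phi G x 1 ws = 0"
proof -
  obtain w where ws: "ws = [w]" using len by (cases ws) auto
  let ?c = "real (card (unit_vecs :: (int^'d) set))"
  have c2: "?c \<ge> 2" by (simp add: card_unit_vecs)
  show ?thesis
  proof (rule harm_zero[OF fin, where h="\<lambda>y. Phi G y 1 ws"])
    show "Phi G y 1 ws = 0" if "y \<notin> G" for y using that by (simp add: Phi_out tunit_def)
    fix y assume y: "y \<in> G"
    have "Phi G y 1 ws = (\<Sum>e\<in>unit_vecs. Phi G (y + e) 1 ws + real_of_int (e $ w)) / ?c"
      by (subst Phi_in[OF fin y]) (simp add: texp_def ws Phi0[OF fin] ivec_def)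
    also have "\<dots> = (\<Sum>e\<in>unit_vecs. Phi G (y + e) 1 ws) / ?c"
      by (simp add: sum.distrib sum_unit_vecs_coord)
    finally show "Phi G y 1 ws = (\<Sum>e\<in>unit_vecs. Phi G (y + e) 1 ws) / ?c" .
  qed
qed

lemma PhiN:
  fixes G :: "(int^'d::finite) set"
  assumes fin: "finite G" and n: "1 \<le> n"
  shows "Phi G x n ws = integral\<^sup>L walk_measure (HH G (\<lambda>y. gfun G n y ws) x)"
proof -
  let ?c = "real (card (unit_vecs :: (int^'d) set))"
  let ?g = "\<lambda>y. gfun G n y ws"
  have c2: "?c \<ge> 2" by (simp add: card_unit_vecs)
  have "(\<lambda>y. Phi G y n ws - integral\<^sup>L walk_measure (HH G ?g y)) x = 0"
  proof (rule harm_zero[OF fin])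
    show "Phi G y n ws - integral\<^sup>L walk_measure (HH G ?g y) = 0" if "y \<notin> G" for y
      using that n by (simp add: Phi_out HH_out tunit_def)
    fix y assume y: "y \<in> G"
    have g: "?g y = (\<Sum>e\<in>unit_vecs. \<Sum>k=1..n. texp (ivec e) k (take k ws) * Phi G (y + e) (n - k) (drop k ws)) / ?c"
      unfolding gfun_def
      by (simp add: card_unit_vecs sum_divide_distrib texp_def ivec_def)
    have "Phi G y n ws = (\<Sum>e\<in>unit_vecs. Phi G (y + e) n ws + (\<Sum>k=1..n. texp (ivec e) k (take k ws) * Phi G (y + e) (n - k) (drop k ws))) / ?c"
      by (subst Phi_in[OF fin y]) (simp add: sum_atMost_split0[of _ n] texp_def)
    also have "\<dots> = (\<Sum>e\<in>unit_vecs. Phi G (y + e) n ws) / ?c + ?g y"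
      unfolding g by (simp add: sum.distrib add_divide_distrib)
    finally have P: "Phi G y n ws = (\<Sum>e\<in>unit_vecs. Phi G (y + e) n ws) / ?c + ?g y" .
    have "integral\<^sup>L walk_measure (HH G ?g y) = (\<Sum>e\<in>unit_vecs. ?g y + integral\<^sup>L walk_measure (HH G ?g (y + e))) / ?c"
      by (subst HH_in[OF fin y]) (simp add: Phi0[OF fin])
    also have "\<dots> = ?g y + (\<Sum>e\<in>unit_vecs. integral\<^sup>L walk_measure (HH G ?g (y + e))) / ?c"
      using c2 by (simp add: sum.distrib add_divide_distrib)
    finally have R: "integral\<^sup>L walk_measure (HH G ?g y) = ?g y + (\<Sum>e\<in>unit_vecs. integral\<^sup>L walk_measure (HH G ?g (y + e))) / ?c" .
    show "Phi G y n ws - integral\<^sup>L walk_measure (HH G ?g y) =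
      (\<Sum>e\<in>unit_vecs. Phi G (y + e) n ws - integral\<^sup>L walk_measure (HH G ?g (y + e))) / ?c"
      unfolding P R by (simp add: sum_subtractf diff_divide_distrib)
  qed
  thus ?thesis by simp
qed

theorem mainTheorem18:
  fixes G :: "(int ^ 'd) set" and x :: "int ^ 'd"
  assumes "finite G" and "x \<in> clos G"
  shows "(\<forall>n ws. 2 \<le> n \<longrightarrow> length ws = n \<longrightarrow>
            Phi G x n ws =
              (\<integral>\<omega>. (case exit_time G x \<omega> of
                   Some t \<Rightarrow> (\<Sum>j<t. gfun G n (walkpos x \<omega> j) ws) | None \<Rightarrow> 0)
                 \<partial>walk_measure))
       \<and> Phi G x 0 [] = 1
       \<and> (\<forall>ws. length ws = 1 \<longrightarrow> Phi G x 1 ws = 0)"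
proof (intro conjI allI impI)
  fix n :: nat and ws :: "'d list"
  assume "2 \<le> n"
  hence "1 \<le> n" by simp
  from PhiN[OF assms(1) this, of x ws] show "Phi G x n ws =
              (\<integral>\<omega>. (case exit_time G x \<omega> of
                   Some t \<Rightarrow> (\<Sum>j<t. gfun G n (walkpos x \<omega> j) ws) | None \<Rightarrow> 0)
                 \<partial>walk_measure)" by (simp add: HH_def[abs_def])
next
  show "Phi G x 0 [] = 1" by (rule Phi0[OF assms(1)])
next
  fix ws :: "'d list" assume "length ws = 1"
  thus "Phi G x 1 ws = 0" by (rule Phi1[OF assms(1)])
qed


end
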